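(* Let $R$ be a commutative ring. An ideal $I$ of $R$ is 2-absorbing if and only if it is strongly 2-absorbing.
   Context: All rings are commutative with identity $1\neq 0$. An ideal $I$ of $R$ is 2-absorbing if whenever $a,b,c\in R$ and $abc\in I$, then $ab\in I$ or $ac\in I$ or $bc\in I$. An ideal $I$ of $R$ is strongly 2-absorbing if whenever $I_1,I_2,I_3$ are ideals of $R$ with $I_1I_2I_3\subseteq I$, then $I_1I_2\subseteq I$ or $I_1I_3\subseteq I$ or $I_2I_3\subseteq I$. *)

theory Defs
  imports "HOL-Algebra.Ideal_Product"
begin

definition two_absorbing_ideal :: "('a, 'b) ring_scheme \<Rightarrow> 'a set \<Rightarrow> bool" where
  "two_absorbing_ideal R I \<longleftrightarrow> ideal I R \<and>
     (\<forall>a \<in> carrier R. \<forall>b \<in> carrier R. \<forall>c \<in> carrier R.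
        a \<otimes>\<^bsub>R\<^esub> b \<otimes>\<^bsub>R\<^esub> c \<in> I \<longrightarrow>
        a \<otimes>\<^bsub>R\<^esub> b \<in> I \<or> a \<otimes>\<^bsub>R\<^esub> c \<in> I \<or> b \<otimes>\<^bsub>R\<^esub> c \<in> I)"

definition strongly_two_absorbing_ideal :: "('a, 'b) ring_scheme \<Rightarrow> 'a set \<Rightarrow> bool" where
  "strongly_two_absorbing_ideal R I \<longleftrightarrow> ideal I R \<and>
     (\<forall>I1 I2 I3. ideal I1 R \<longrightarrow> ideal I2 R \<longrightarrow> ideal I3 R \<longrightarrow>
        I1 \<cdot>\<^bsub>R\<^esub> I2 \<cdot>\<^bsub>R\<^esub> I3 \<subseteq> I \<longrightarrow>
        I1 \<cdot>\<^bsub>R\<^esub> I2 \<subseteq> I \<or> I1 \<cdot>\<^bsub>R\<^esub> I3 \<subseteq> I \<or> I2 \<cdot>\<^bsub>R\<^esub> I3 \<subseteq> I)"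

end

theory Submission
  imports Defs
begin

context cring
begin

lemma prod_sub_iff:
  assumes I: "ideal I R" and J: "ideal J R" and K: "ideal K R"
  shows "J \<cdot> K \<subseteq> I \<longleftrightarrow> (\<forall>j\<in>J. \<forall>k\<in>K. j \<otimes> k \<in> I)"
proof
  assume S: "J \<cdot> K \<subseteq> I"
  show "\<forall>j\<in>J. \<forall>k\<in>K. j \<otimes> k \<in> I"
  proof (intro ballI)
    fix j k assume "j \<in> J" "k \<in> K"
    hence "j \<otimes> k \<in> J \<cdot> K" by (rule ideal_prod.prod)
    thus "j \<otimes> k \<in> I" using S by (rule subsetD[rotated])
  qed
next
  assume H: "\<forall>j\<in>J. \<forall>k\<in>K. j \<otimes> k \<in> I"
  have ad: "additive_subgroup I R" using I by (rule ideal.axioms(1))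
  show "J \<cdot> K \<subseteq> I"
  proof
    fix s assume "s \<in> J \<cdot> K" thus "s \<in> I"
    proof (induct s rule: ideal_prod.induct)
      case (prod i j) thus ?case using H by simp
    next
      case (sum s1 s2) thus ?case using additive_subgroup.a_closed[OF ad] by simp
    qed
  qed
qed

lemma PIdl_prod:
  assumes A: "a \<in> carrier R" "b \<in> carrier R"
  shows "(PIdl a) \<cdot> (PIdl b) = PIdl (a \<otimes> b)"
proof -
  have ab: "a \<otimes> b \<in> carrier R" using A by simp
  have "(PIdl a) \<cdot> (PIdl b) = Idl ((PIdl a) <#> (PIdl b))"
    by (rule ideal_prod_eq_genideal[OF cgenideal_ideal[OF A(1)] cgenideal_ideal[OF A(2)]])
  also have "\<dots> = Idl (PIdl (a \<otimes> b))" using cgenideal_prod[OF A] by simp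
  also have "\<dots> = PIdl (a \<otimes> b)"
  proof
    show "Idl (PIdl (a \<otimes> b)) \<subseteq> PIdl (a \<otimes> b)"
      by (rule genideal_minimal[OF cgenideal_ideal[OF ab]]) (rule subset_refl)
    have "PIdl (a \<otimes> b) \<subseteq> carrier R"
      using ideal.Icarr[OF cgenideal_ideal[OF ab]] by blast
    thus "PIdl (a \<otimes> b) \<subseteq> Idl (PIdl (a \<otimes> b))" by (rule genideal_self)
  qed
  finally show ?thesis .
qed

lemma ideal_sub:
  assumes I: "ideal I R" and xy: "x \<in> carrier R" "y \<in> carrier R" "x \<oplus> y \<in> I" "y \<in> I"
  shows "x \<in> I"
proof -
  have ad: "additive_subgroup I R" using I by (rule ideal.axioms(1))
  have "\<ominus> y \<in> I" using additive_subgroup.a_inv_closed[OF ad xy(4)] .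
  hence "(x \<oplus> y) \<oplus> (\<ominus> y) \<in> I" using additive_subgroup.a_closed[OF ad xy(3)] by blast
  moreover have "(x \<oplus> y) \<oplus> (\<ominus> y) = x" using xy(1,2) by (simp add: a_assoc r_neg)
  ultimately show "x \<in> I" by simp
qed

lemma ideal_sub2:
  assumes I: "ideal I R" and xy: "x \<in> carrier R" "y \<in> carrier R" "x \<oplus> y \<in> I" "x \<in> I"
  shows "y \<in> I"
proof -
  have "y \<oplus> x \<in> I" using xy(3) a_comm[OF xy(1,2)] by simp
  thus ?thesis using ideal_sub[OF I xy(2,1) _ xy(4)] by blast
qed

lemma lem1:
  assumes T: "two_absorbing_ideal R I" and J: "ideal J R"
    and a: "a \<in> carrier R" and b: "b \<in> carrier R"
    and H: "\<forall>j\<in>J. a \<otimes> b \<otimes> j \<in> I"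
  shows "a \<otimes> b \<in> I \<or> (\<forall>j\<in>J. a \<otimes> j \<in> I) \<or> (\<forall>j\<in>J. b \<otimes> j \<in> I)"
proof (rule ccontr)
  have I: "ideal I R" using T unfolding two_absorbing_ideal_def by (rule conjunct1)
  have abs: "\<And>x y z. x \<in> carrier R \<Longrightarrow> y \<in> carrier R \<Longrightarrow> z \<in> carrier R \<Longrightarrow>
     x \<otimes> y \<otimes> z \<in> I \<Longrightarrow> x \<otimes> y \<in> I \<or> x \<otimes> z \<in> I \<or> y \<otimes> z \<in> I"
    using T unfolding two_absorbing_ideal_def by blast
  assume "\<not> ?thesis"
  then obtain j1 j2 where n: "a \<otimes> b \<notin> I" "j1 \<in> J" "a \<otimes> j1 \<notin> I" "j2 \<in> J" "b \<otimes> j2 \<notin> I"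
    by blast
  have c1: "j1 \<in> carrier R" "j2 \<in> carrier R" using ideal.Icarr[OF J n(2)] ideal.Icarr[OF J n(4)] by simp_all
  have bj1: "b \<otimes> j1 \<in> I" using abs[OF a b c1(1)] H n by blast
  moreover have aj2: "a \<otimes> j2 \<in> I" using abs[OF a b c1(2)] H n by blast
  moreover have js: "j1 \<oplus> j2 \<in> J" using n J by (simp add: additive_subgroup.a_closed ideal.axioms(1))
  hence cs: "j1 \<oplus> j2 \<in> carrier R" using c1 by simp
  have "a \<otimes> (j1 \<oplus> j2) \<in> I \<or> b \<otimes> (j1 \<oplus> j2) \<in> I"
    using abs[OF a b cs] H n js by blast
  moreover have "a \<otimes> (j1 \<oplus> j2) = a \<otimes> j1 \<oplus> a \<otimes> j2" "b \<otimes> (j1 \<oplus> j2) = b \<otimes> j1 \<oplus> b \<otimes> j2"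
    using a b c1 by (simp_all add: r_distr)
  ultimately have disj: "a \<otimes> j1 \<oplus> a \<otimes> j2 \<in> I \<or> b \<otimes> j1 \<oplus> b \<otimes> j2 \<in> I" by simp
  have cc: "a \<otimes> j1 \<in> carrier R" "a \<otimes> j2 \<in> carrier R" "b \<otimes> j1 \<in> carrier R" "b \<otimes> j2 \<in> carrier R"
    using a b c1 by simp_all
  from disj show False
  proof
    assume "a \<otimes> j1 \<oplus> a \<otimes> j2 \<in> I"
    from ideal_sub[OF I cc(1,2) this \<open>a \<otimes> j2 \<in> I\<close>] n show False by simp
  next
    assume "b \<otimes> j1 \<oplus> b \<otimes> j2 \<in> I"
    from ideal_sub2[OF I cc(3,4) this \<open>b \<otimes> j1 \<in> I\<close>] n show False by simp
  qed
qed

lemma lem2: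
  assumes T: "two_absorbing_ideal R I" and J: "ideal J R" and K: "ideal K R"
    and a: "a \<in> carrier R"
    and H: "\<forall>j\<in>J. \<forall>k\<in>K. a \<otimes> j \<otimes> k \<in> I"
  shows "(\<forall>j\<in>J. a \<otimes> j \<in> I) \<or> (\<forall>k\<in>K. a \<otimes> k \<in> I) \<or> (\<forall>j\<in>J. \<forall>k\<in>K. j \<otimes> k \<in> I)"
proof (rule ccontr)
  have I: "ideal I R" using T unfolding two_absorbing_ideal_def by (rule conjunct1)
  assume "\<not> ?thesis"
  then obtain j1 k1 where n: "j1 \<in> J" "a \<otimes> j1 \<notin> I" "k1 \<in> K" "a \<otimes> k1 \<notin> I"
    and nn: "\<not> (\<forall>j\<in>J. \<forall>k\<in>K. j \<otimes> k \<in> I)"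
    by blast
  have c1: "j1 \<in> carrier R" using ideal.Icarr[OF J n(1)] .
  have key: "\<forall>k\<in>K. j \<otimes> k \<in> I" if "j \<in> J" "a \<otimes> j \<notin> I" for j
  proof -
    have "j \<in> carrier R" using ideal.Icarr[OF J that(1)] .
    from lem1[OF T K a this] H that n show ?thesis by blast
  qed
  have all: "\<forall>k\<in>K. j \<otimes> k \<in> I" if j: "j \<in> J" for j
  proof (cases "a \<otimes> j \<in> I")
    case False then show ?thesis using key j by blast
  next
    case True
    have cj: "j \<in> carrier R" using ideal.Icarr[OF J j] .
    have js: "j \<oplus> j1 \<in> J" using n j J by (simp add: additive_subgroup.a_closed ideal.axioms(1))
    have "a \<otimes> (j \<oplus> j1) \<notin> I"
    proof
      assume "a \<otimes> (j \<oplus> j1) \<in> I"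
      hence "a \<otimes> j \<oplus> a \<otimes> j1 \<in> I" using a cj c1 by (simp add: r_distr)
      hence "a \<otimes> j1 \<in> I" using ideal_sub2[OF I _ _ _ True] a cj c1 by (meson m_closed)
      thus False using n by simp
    qed
    hence A: "\<forall>k\<in>K. (j \<oplus> j1) \<otimes> k \<in> I" using key js by blast
    have B: "\<forall>k\<in>K. j1 \<otimes> k \<in> I" using key n by blast
    show ?thesis
    proof
      fix k assume k: "k \<in> K"
      have ck: "k \<in> carrier R" using ideal.Icarr[OF K k] .
      have "(j \<oplus> j1) \<otimes> k \<in> I" using A k by blast
      moreover have "(j \<oplus> j1) \<otimes> k = j \<otimes> k \<oplus> j1 \<otimes> k" using cj c1 ck by (rule l_distr)
      ultimately have "j \<otimes> k \<oplus> j1 \<otimes> k \<in> I" by simp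
      thus "j \<otimes> k \<in> I" using ideal_sub[OF I, of "j \<otimes> k" "j1 \<otimes> k"] B k cj c1 ck by (meson m_closed)
    qed
  qed
  thus False using nn by blast
qed

lemma fwd:
  assumes T: "two_absorbing_ideal R I"
  shows "strongly_two_absorbing_ideal R I"
  unfolding strongly_two_absorbing_ideal_def
proof (intro conjI allI impI)
  have I: "ideal I R" using T unfolding two_absorbing_ideal_def by (rule conjunct1)
  show "ideal I R" by fact
  fix I1 I2 I3 assume I1: "ideal I1 R" and I2: "ideal I2 R" and I3: "ideal I3 R"
    and S: "I1 \<cdot> I2 \<cdot> I3 \<subseteq> I"
  have H: "\<forall>a\<in>I1. \<forall>b\<in>I2. \<forall>c\<in>I3. a \<otimes> b \<otimes> c \<in> I"
  proof (intro ballI)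
    fix a b c assume "a \<in> I1" "b \<in> I2" "c \<in> I3"
    have "a \<otimes> b \<in> I1 \<cdot> I2" by (rule ideal_prod.prod) fact+
    hence "a \<otimes> b \<otimes> c \<in> I1 \<cdot> I2 \<cdot> I3" by (rule ideal_prod.prod) fact
    thus "a \<otimes> b \<otimes> c \<in> I" using S by (rule subsetD[rotated])
  qed
  show "I1 \<cdot> I2 \<subseteq> I \<or> I1 \<cdot> I3 \<subseteq> I \<or> I2 \<cdot> I3 \<subseteq> I"
  proof (rule ccontr)
    assume nt: "\<not> ?thesis"
    have n: "\<not> (\<forall>j\<in>I1. \<forall>k\<in>I2. j \<otimes> k \<in> I)" "\<not> (\<forall>j\<in>I1. \<forall>k\<in>I3. j \<otimes> k \<in> I)"
      "\<not> (\<forall>j\<in>I2. \<forall>k\<in>I3. j \<otimes> k \<in> I)"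
      using nt unfolding prod_sub_iff[OF I I1 I2] prod_sub_iff[OF I I1 I3] prod_sub_iff[OF I I2 I3]
      by simp_all
    have L: "(\<forall>j\<in>I2. x \<otimes> j \<in> I) \<or> (\<forall>k\<in>I3. x \<otimes> k \<in> I)" if x: "x \<in> I1" for x
    proof -
      have "x \<in> carrier R" using ideal.Icarr[OF I1 x] .
      from lem2[OF T I2 I3 this] H x n(3) show ?thesis by blast
    qed
    obtain a b where ab: "a \<in> I1" "b \<in> I2" "a \<otimes> b \<notin> I" using n(1) by blast
    obtain a' c where ac: "a' \<in> I1" "c \<in> I3" "a' \<otimes> c \<notin> I" using n(2) by blast
    have ca: "a \<in> carrier R" "a' \<in> carrier R" "b \<in> carrier R" "c \<in> carrier R"
      using ideal.Icarr[OF I1 ab(1)] ideal.Icarr[OF I1 ac(1)] ideal.Icarr[OF I2 ab(2)] ideal.Icarr[OF I3 ac(2)] by simp_all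
    have aI3: "a \<otimes> c \<in> I" using L[OF ab(1)] ab ac by blast
    have a'I2: "a' \<otimes> b \<in> I" using L[OF ac(1)] ab ac by blast
    have s: "a \<oplus> a' \<in> I1" using ab ac I1 by (simp add: additive_subgroup.a_closed ideal.axioms(1))
    show False
    proof (cases "\<forall>j\<in>I2. (a \<oplus> a') \<otimes> j \<in> I")
      case True
      hence "(a \<oplus> a') \<otimes> b \<in> I" using ab by blast
      moreover have "(a \<oplus> a') \<otimes> b = a \<otimes> b \<oplus> a' \<otimes> b" using ca by (simp add: l_distr)
      ultimately have "a \<otimes> b \<oplus> a' \<otimes> b \<in> I" by simp
      thus False using ideal_sub[OF I, of "a \<otimes> b" "a' \<otimes> b"] a'I2 ca ab by (meson m_closed)
    next
      case False
      hence "\<forall>k\<in>I3. (a \<oplus> a') \<otimes> k \<in> I" using L[OF s] by blast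
      hence "(a \<oplus> a') \<otimes> c \<in> I" using ac by blast
      moreover have "(a \<oplus> a') \<otimes> c = a \<otimes> c \<oplus> a' \<otimes> c" using ca by (simp add: l_distr)
      ultimately have "a \<otimes> c \<oplus> a' \<otimes> c \<in> I" by simp
      thus False using ideal_sub2[OF I, of "a \<otimes> c" "a' \<otimes> c"] aI3 ca ac by (meson m_closed)
    qed
  qed
qed

lemma bwd:
  assumes S: "strongly_two_absorbing_ideal R I"
  shows "two_absorbing_ideal R I"
  unfolding two_absorbing_ideal_def
proof (intro conjI ballI impI)
  have I: "ideal I R" using S unfolding strongly_two_absorbing_ideal_def by (rule conjunct1)
  show "ideal I R" by fact
  fix a b c assume a: "a \<in> carrier R" and b: "b \<in> carrier R" and c: "c \<in> carrier R"
    and abc: "a \<otimes> b \<otimes> c \<in> I"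
  have P: "ideal (PIdl x) R" if "x \<in> carrier R" for x using cgenideal_ideal[OF that] .
  have SS: "\<And>I1 I2 I3. ideal I1 R \<Longrightarrow> ideal I2 R \<Longrightarrow> ideal I3 R \<Longrightarrow>
        I1 \<cdot> I2 \<cdot> I3 \<subseteq> I \<Longrightarrow>
        I1 \<cdot> I2 \<subseteq> I \<or> I1 \<cdot> I3 \<subseteq> I \<or> I2 \<cdot> I3 \<subseteq> I"
    using S unfolding strongly_two_absorbing_ideal_def by blast
  have ab: "a \<otimes> b \<in> carrier R" using a b by simp
  have "(PIdl a) \<cdot> (PIdl b) \<cdot> (PIdl c) = (PIdl (a \<otimes> b)) \<cdot> (PIdl c)"
    using PIdl_prod[OF a b] by simp
  also have "\<dots> = PIdl (a \<otimes> b \<otimes> c)" using PIdl_prod[OF ab c] .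
  also have "\<dots> \<subseteq> I" using cgenideal_minimal[OF I abc] .
  finally have "(PIdl a) \<cdot> (PIdl b) \<subseteq> I \<or> (PIdl a) \<cdot> (PIdl c) \<subseteq> I \<or> (PIdl b) \<cdot> (PIdl c) \<subseteq> I"
    by (rule SS[OF P[OF a] P[OF b] P[OF c]])
  hence "PIdl (a \<otimes> b) \<subseteq> I \<or> PIdl (a \<otimes> c) \<subseteq> I \<or> PIdl (b \<otimes> c) \<subseteq> I"
    unfolding PIdl_prod[OF a b] PIdl_prod[OF a c] PIdl_prod[OF b c] .
  moreover have "a \<otimes> b \<in> PIdl (a \<otimes> b)" "a \<otimes> c \<in> PIdl (a \<otimes> c)" "b \<otimes> c \<in> PIdl (b \<otimes> c)"
    using cgenideal_self a b c by simp_all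
  ultimately show "a \<otimes> b \<in> I \<or> a \<otimes> c \<in> I \<or> b \<otimes> c \<in> I"
    by blast
qed

end

theorem theorem2p13:
  fixes R :: "('a, 'b) ring_scheme" and I :: "'a set"
  assumes "cring R" and "\<one>\<^bsub>R\<^esub> \<noteq> \<zero>\<^bsub>R\<^esub>" and "ideal I R"
  shows "two_absorbing_ideal R I \<longleftrightarrow> strongly_two_absorbing_ideal R I"
  using cring.fwd[OF assms(1)] cring.bwd[OF assms(1)] by blast

end
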